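(* For every $g\ge 3$, there exist graphs of girth $g$ that do not belong to CBU.
   Context: Let $e_1,\ldots,e_d$ be the standard basis of $\mathbb{R}^d$. For $d\ge 1$, a graph belongs to $d$-CBU if one can assign to each vertex an axis-parallel box (product of $d$ closed intervals of positive length) in $\mathbb{R}^d$ such that the boxes have pairwise disjoint interiors, two distinct vertices are adjacent iff their boxes intersect, and any two intersecting boxes intersect in a $(d-1)$-dimensional box orthogonal to $e_1$. CBU is the union of $d$-CBU over all $d\ge 1$. *)

theory Defs
  imports Complex_Main
begin

definition simple_graph :: "'a set \<Rightarrow> ('a \<Rightarrow> 'a \<Rightarrow> bool) \<Rightarrow> bool" where
  "simple_graph V E \<longleftrightarrow> finite V \<and> (\<forall>u v. E u v \<longrightarrow> u \<in> V \<and> v \<in> V) \<and>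
     (\<forall>u v. E u v \<longrightarrow> E v u) \<and> (\<forall>v. \<not> E v v)"

definition has_cycle_of_length :: "'a set \<Rightarrow> ('a \<Rightarrow> 'a \<Rightarrow> bool) \<Rightarrow> nat \<Rightarrow> bool" where
  "has_cycle_of_length V E k \<longleftrightarrow> k \<ge> 3 \<and> (\<exists>vs. length vs = k \<and> distinct vs \<and> set vs \<subseteq> V \<and>
     (\<forall>i<k. E (vs ! i) (vs ! ((i + 1) mod k))))"

definition has_girth :: "'a set \<Rightarrow> ('a \<Rightarrow> 'a \<Rightarrow> bool) \<Rightarrow> nat \<Rightarrow> bool" where
  "has_girth V E g \<longleftrightarrow> has_cycle_of_length V E g \<and> (\<forall>k<g. \<not> has_cycle_of_length V E k)"

(* Box of vertex v in R^d: product over coordinates i < d of [lo v i, hi v i], lo v i < hi v i.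
   Coordinate 0 corresponds to e_1. *)
definition CBU_rep :: "nat \<Rightarrow> 'a set \<Rightarrow> ('a \<Rightarrow> 'a \<Rightarrow> bool) \<Rightarrow>
     ('a \<Rightarrow> nat \<Rightarrow> real) \<Rightarrow> ('a \<Rightarrow> nat \<Rightarrow> real) \<Rightarrow> bool" where
  "CBU_rep d V E lo hi \<longleftrightarrow>
     (\<forall>v\<in>V. \<forall>i<d. lo v i < hi v i) \<and>
     (\<forall>u\<in>V. \<forall>v\<in>V. u \<noteq> v \<longrightarrow>
        \<comment> \<open>pairwise disjoint interiors\<close>
        (\<exists>i<d. hi u i \<le> lo v i \<or> hi v i \<le> lo u i) \<and>
        \<comment> \<open>adjacent iff boxes intersect\<close>
        (E u v \<longleftrightarrow> (\<forall>i<d. lo u i \<le> hi v i \<and> lo v i \<le> hi u i)) \<and>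
        \<comment> \<open>intersecting boxes meet in a (d-1)-dimensional box orthogonal to e_1\<close>
        ((\<forall>i<d. lo u i \<le> hi v i \<and> lo v i \<le> hi u i) \<longrightarrow>
           max (lo u 0) (lo v 0) = min (hi u 0) (hi v 0) \<and>
           (\<forall>i. 0 < i \<and> i < d \<longrightarrow> max (lo u i) (lo v i) < min (hi u i) (hi v i))))"

definition d_CBU :: "nat \<Rightarrow> 'a set \<Rightarrow> ('a \<Rightarrow> 'a \<Rightarrow> bool) \<Rightarrow> bool" where
  "d_CBU d V E \<longleftrightarrow> (\<exists>lo hi. CBU_rep d V E lo hi)"

definition CBU :: "'a set \<Rightarrow> ('a \<Rightarrow> 'a \<Rightarrow> bool) \<Rightarrow> bool" where
  "CBU V E \<longleftrightarrow> (\<exists>d\<ge>1. d_CBU d V E)"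

end

theory Submission
  imports Defs
begin

lemma touch_real:
  fixes a b c d :: real
  assumes "a < b" "c < d" "max a c = min b d"
  shows "b = c \<or> d = a"
  using assms by (auto simp: max_def min_def split: if_splits)

lemma count_sets:
  assumes "finite T" "a \<in> T" "b \<in> T" "a \<noteq> b"
  shows "card {A\<in>Pow T. a \<in> A \<and> b \<notin> A} = 2 ^ (card T - 2)"
proof -
  have "bij_betw (insert a) (Pow (T - {a,b})) {A\<in>Pow T. a \<in> A \<and> b \<notin> A}"
    by (rule bij_betw_byWitness[where f'="\<lambda>A. A - {a}"]) (use assms in auto)
  then have "card {A\<in>Pow T. a \<in> A \<and> b \<notin> A} = card (Pow (T - {a,b}))"
    by (simp add: bij_betw_same_card)
  also have "\<dots> = 2 ^ card (T - {a,b})" using assms by (simp add: card_Pow)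
  also have "card (T - {a,b}) = card T - 2" using assms by (simp add: card_Diff_subset)
  finally show ?thesis .
qed

lemma card_filter_sum:
  "finite A \<Longrightarrow> card {x\<in>A. P x} = (\<Sum>x\<in>A. if P x then 1 else 0::nat)"
  by (simp add: sum.inter_filter[symmetric])

lemma CBU_indep:
  assumes rep: "CBU_rep d V E lo hi" and d: "d \<ge> 1" and fin: "finite V"
  shows "\<exists>I\<subseteq>V. (\<forall>u\<in>I. \<forall>v\<in>I. u \<noteq> v \<longrightarrow> \<not> E u v) \<and> card V \<le> 4 * card I"
proof (cases "V = {}")
  case True then show ?thesis by auto
next
  case False
  define T where "T = (\<lambda>v. lo v 0) ` V \<union> (\<lambda>v. hi v 0) ` V"
  define I where "I A = {v\<in>V. lo v 0 \<in> A \<and> hi v 0 \<notin> A}" for A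
  have lohi: "lo v 0 < hi v 0" if "v \<in> V" for v
    using rep d that unfolding CBU_rep_def by auto
  have finT: "finite T" using fin by (simp add: T_def)
  have indep: "\<not> E u v" if "u \<in> I A" "v \<in> I A" "u \<noteq> v" for A u v
  proof
    assume "E u v"
    have uv: "u \<in> V" "v \<in> V" using that by (auto simp: I_def)
    have "max (lo u 0) (lo v 0) = min (hi u 0) (hi v 0)"
      using rep d uv that(3) \<open>E u v\<close> unfolding CBU_rep_def by auto
    then have "hi u 0 = lo v 0 \<or> hi v 0 = lo u 0"
      using touch_real lohi uv by blast
    then show False using that by (auto simp: I_def)
  qed
  obtain v0 where v0: "v0 \<in> V" using False by auto
  have "card {lo v0 0, hi v0 0} \<le> card T"
    by (rule card_mono[OF finT]) (use v0 in \<open>auto simp: T_def\<close>)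
  then have cT: "card T \<ge> 2" using lohi[OF v0] by simp
  have "(\<Sum>A\<in>Pow T. card (I A)) = (\<Sum>A\<in>Pow T. \<Sum>v\<in>V. if lo v 0 \<in> A \<and> hi v 0 \<notin> A then 1 else 0)"
    unfolding I_def using fin by (simp add: card_filter_sum)
  also have "\<dots> = (\<Sum>v\<in>V. \<Sum>A\<in>Pow T. if lo v 0 \<in> A \<and> hi v 0 \<notin> A then 1 else 0)"
    by (rule sum.swap)
  also have "\<dots> = (\<Sum>v\<in>V. card {A\<in>Pow T. lo v 0 \<in> A \<and> hi v 0 \<notin> A})"
    by (intro sum.cong refl, rule card_filter_sum[symmetric]) (simp add: finT)
  also have "\<dots> = (\<Sum>v\<in>V. 2 ^ (card T - 2))"
  proof (rule sum.cong[OF refl])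
    fix v assume "v \<in> V"
    then show "card {A\<in>Pow T. lo v 0 \<in> A \<and> hi v 0 \<notin> A} = 2 ^ (card T - 2)"
      using lohi[of v] by (intro count_sets finT) (auto simp: T_def)
  qed
  also have "\<dots> = card V * 2 ^ (card T - 2)" by simp
  finally have S: "(\<Sum>A\<in>Pow T. card (I A)) = card V * 2 ^ (card T - 2)" .
  show ?thesis
  proof (rule ccontr)
    assume neg: "\<not> ?thesis"
    have lt: "4 * card (I A) < card V" for A
    proof -
      have "I A \<subseteq> V" by (auto simp: I_def)
      moreover have "\<forall>u\<in>I A. \<forall>v\<in>I A. u \<noteq> v \<longrightarrow> \<not> E u v" using indep by blast
      ultimately show ?thesis using neg by (meson not_le)
    qed
    have "(\<Sum>A\<in>Pow T. 4 * card (I A)) < (\<Sum>A\<in>Pow T. card V)"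
      by (rule sum_strict_mono) (use finT lt in auto)
    also have "\<dots> = 2 ^ card T * card V" using finT by (simp add: card_Pow)
    also have "(2::nat) ^ card T = 4 * 2 ^ (card T - 2)"
    proof -
      obtain k where "card T = k + 2" using cT le_Suc_ex by (metis add.commute)
      then show ?thesis by (simp add: power_add)
    qed
    finally have "(\<Sum>A\<in>Pow T. 4 * card (I A)) < 4 * (card V * 2 ^ (card T - 2))" by (simp add: ac_simps)
    moreover have "(\<Sum>A\<in>Pow T. 4 * card (I A)) = 4 * (\<Sum>A\<in>Pow T. card (I A))"
      by (simp add: sum_distrib_left)
    ultimately show False using S by simp
  qed
qed

definition wt :: "real \<Rightarrow> 'a set \<Rightarrow> 'a set \<Rightarrow> real" where
  "wt p P E = (\<Prod>e\<in>P. if e \<in> E then p else 1 - p)"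

lemma sum_prod_if:
  fixes a b :: "'a \<Rightarrow> real"
  assumes "finite P"
  shows "(\<Sum>E\<in>Pow P. \<Prod>e\<in>P. if e \<in> E then a e else b e) = (\<Prod>e\<in>P. a e + b e)"
proof -
  have "(\<Prod>e\<in>P. a e + b e) = (\<Sum>X\<in>Pow P. (\<Prod>x\<in>X. a x) * (\<Prod>x\<in>P-X. b x))"
    by (rule prod_add[OF assms])
  also have "\<dots> = (\<Sum>E\<in>Pow P. \<Prod>e\<in>P. if e \<in> E then a e else b e)"
  proof (rule sum.cong[OF refl])
    fix X assume "X \<in> Pow P"
    then have "P \<inter> {e. e \<in> X} = X" "P - {e. e \<in> X} = P - X" "P \<inter> - X = P - X" by auto
    then show "(\<Prod>x\<in>X. a x) * (\<Prod>x\<in>P-X. b x) = (\<Prod>e\<in>P. if e \<in> X then a e else b e)"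
      using assms by (simp add: prod.If_cases)
  qed
  finally show ?thesis by simp
qed

lemma wt_total: "finite P \<Longrightarrow> (\<Sum>E\<in>Pow P. wt p P E) = 1"
  unfolding wt_def by (simp add: sum_prod_if)

lemma wt_nonneg: "0 \<le> p \<Longrightarrow> p \<le> 1 \<Longrightarrow> 0 \<le> wt p P E"
  unfolding wt_def by (rule prod_nonneg) auto

lemma wt_sup:
  assumes "finite P" "S \<subseteq> P"
  shows "(\<Sum>E\<in>Pow P. if S \<subseteq> E then wt p P E else 0) = p ^ card S"
proof -
  have "(\<Sum>E\<in>Pow P. if S \<subseteq> E then wt p P E else 0) =
        (\<Sum>E\<in>Pow P. \<Prod>e\<in>P. if e \<in> E then p else (if e \<in> S then 0 else 1 - p))"
  proof (rule sum.cong[OF refl])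
    fix E assume "E \<in> Pow P"
    show "(if S \<subseteq> E then wt p P E else 0) = (\<Prod>e\<in>P. if e \<in> E then p else (if e \<in> S then 0 else 1 - p))"
    proof (cases "S \<subseteq> E")
      case True
      then show ?thesis unfolding wt_def by (auto intro!: prod.cong)
    next
      case False
      then obtain e0 where "e0 \<in> S" "e0 \<notin> E" by auto
      then show ?thesis using False assms
        by (subst prod_zero) (auto intro!: bexI[of _ e0])
    qed
  qed
  also have "\<dots> = (\<Prod>e\<in>P. p + (if e \<in> S then 0 else 1 - p))"
    by (rule sum_prod_if[OF assms(1)])
  also have "\<dots> = (\<Prod>e\<in>P. if e \<in> S then p else 1)"
    by (rule prod.cong) auto
  also have "\<dots> = p ^ card S"
    using assms by (simp add: prod.If_cases Int_absorb1 Int_absorb2 Int_commute)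
  finally show ?thesis .
qed

lemma wt_disj:
  assumes "finite P" "S \<subseteq> P"
  shows "(\<Sum>E\<in>Pow P. if S \<inter> E = {} then wt p P E else 0) = (1 - p) ^ card S"
proof -
  have "(\<Sum>E\<in>Pow P. if S \<inter> E = {} then wt p P E else 0) =
        (\<Sum>E\<in>Pow P. \<Prod>e\<in>P. if e \<in> E then (if e \<in> S then 0 else p) else 1 - p)"
  proof (rule sum.cong[OF refl])
    fix E assume "E \<in> Pow P"
    show "(if S \<inter> E = {} then wt p P E else 0) = (\<Prod>e\<in>P. if e \<in> E then (if e \<in> S then 0 else p) else 1 - p)"
    proof (cases "S \<inter> E = {}")
      case True
      then show ?thesis unfolding wt_def by (auto intro!: prod.cong)
    next
      case False
      then obtain e0 where "e0 \<in> S" "e0 \<in> E" by auto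
      then show ?thesis using False assms
        by (subst prod_zero) (auto intro!: bexI[of _ e0])
    qed
  qed
  also have "\<dots> = (\<Prod>e\<in>P. (if e \<in> S then 0 else p) + (1 - p))"
    by (rule sum_prod_if[OF assms(1)])
  also have "\<dots> = (\<Prod>e\<in>P. if e \<in> S then 1 - p else 1)"
    by (rule prod.cong) auto
  also have "\<dots> = (1 - p) ^ card S"
    using assms by (simp add: prod.If_cases Int_absorb1 Int_absorb2 Int_commute)
  finally show ?thesis .
qed

definition pairs :: "nat set \<Rightarrow> nat set set" where
  "pairs A = {e. e \<subseteq> A \<and> card e = 2}"

definition cyc :: "nat list \<Rightarrow> nat set set" where
  "cyc l = (\<lambda>i. {l!i, l!((i+1) mod length l)}) ` {..<length l}"

definition CL :: "nat \<Rightarrow> nat \<Rightarrow> nat list set" where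
  "CL n g = {l. set l \<subseteq> {..<n} \<and> distinct l \<and> 3 \<le> length l \<and> length l < g}"

definition bad :: "nat \<Rightarrow> nat \<Rightarrow> nat set set \<Rightarrow> nat list set" where
  "bad n g E = {l\<in>CL n g. cyc l \<subseteq> E}"

lemma mod_arith_aux:
  fixes i j k :: nat
  assumes "i < k" "j < k" "3 \<le> k" "i = (j+1) mod k" "j = (i+1) mod k"
  shows False
proof (cases "j + 1 < k")
  case True
  then have m1: "(j+1) mod k = j + 1" by simp
  then have ij: "i = j + 1" using assms(4) by linarith
  show False
  proof (cases "i + 1 < k")
    case True
    then have "(i+1) mod k = i + 1" by simp
    then show False using assms(5) ij by linarith
  next
    case False
    then have "i + 1 = k" using assms(1) by simp
    then have "(i+1) mod k = 0" by simp
    then show False using assms(5) ij \<open>i + 1 = k\<close> assms(3) by linarith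
  qed
next
  case False
  then have "j + 1 = k" using assms(2) by simp
  then have "(j+1) mod k = 0" by simp
  then have "i = 0" using assms(4) by linarith
  then have "(i+1) mod k = 1" using assms(3) by simp
  then show False using assms(5) \<open>j + 1 = k\<close> assms(3) by linarith
qed

lemma card_cyc:
  assumes "distinct l" "3 \<le> length l"
  shows "card (cyc l) = length l"
proof -
  let ?k = "length l"
  have "inj_on (\<lambda>i. {l!i, l!((i+1) mod ?k)}) {..<?k}"
  proof (rule inj_onI)
    fix i j assume ij: "i \<in> {..<?k}" "j \<in> {..<?k}"
      and eq: "{l!i, l!((i+1) mod ?k)} = {l!j, l!((j+1) mod ?k)}"
    have kpos: "0 < ?k" using assms by linarith
    have i1: "(i+1) mod ?k < ?k" "(j+1) mod ?k < ?k" using kpos by auto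
    have inj: "\<And>a b. a < ?k \<Longrightarrow> b < ?k \<Longrightarrow> l!a = l!b \<Longrightarrow> a = b"
      using assms(1) nth_eq_iff_index_eq by blast
    from eq have "l!i = l!j \<or> (l!i = l!((j+1) mod ?k) \<and> l!((i+1) mod ?k) = l!j)"
      unfolding doubleton_eq_iff by blast
    then show "i = j"
    proof
      have ilt: "i < ?k" "j < ?k" using ij by auto
      assume "l!i = l!j" then show ?thesis using inj[OF ilt] by blast
    next
      have ilt: "i < ?k" "j < ?k" using ij by auto
      assume h: "l!i = l!((j+1) mod ?k) \<and> l!((i+1) mod ?k) = l!j"
      have h1: "i = (j+1) mod ?k" using inj[OF ilt(1) i1(2)] h by blast
      have h2: "(i+1) mod ?k = j" using inj[OF i1(1) ilt(2)] h by blast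
      from mod_arith_aux[OF ilt assms(2) h1 h2[symmetric]] show ?thesis ..
    qed
  qed
  then show ?thesis unfolding cyc_def by (simp add: card_image)
qed

lemma cyc_sub_pairs:
  assumes "l \<in> CL n g"
  shows "cyc l \<subseteq> pairs {..<n}"
proof
  fix e assume "e \<in> cyc l"
  then obtain i where i: "i < length l" "e = {l!i, l!((i+1) mod length l)}"
    unfolding cyc_def by auto
  have k: "3 \<le> length l" "distinct l" "set l \<subseteq> {..<n}" using assms by (auto simp: CL_def)
  have i1: "(i+1) mod length l < length l" using k by (intro mod_less_divisor) linarith
  have ne: "(i+1) mod length l \<noteq> i"
  proof
    assume "(i+1) mod length l = i"
    show False
    proof (cases "i + 1 < length l")
      case True then show False using \<open>(i+1) mod length l = i\<close> by simp
    next
      case False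
      then have "i + 1 = length l" using i by simp
      then show False using \<open>(i+1) mod length l = i\<close> k by simp
    qed
  qed
  then have "l!i \<noteq> l!((i+1) mod length l)" using nth_eq_iff_index_eq[OF k(2) i(1) i1] by simp
  moreover have "l!i \<in> {..<n}" "l!((i+1) mod length l) \<in> {..<n}"
    using subsetD[OF k(3) nth_mem[OF i(1)]] subsetD[OF k(3) nth_mem[OF i1]] by blast+
  ultimately have "{l!i, l!((i+1) mod length l)} \<in> pairs {..<n}" unfolding pairs_def by simp
  then show "e \<in> pairs {..<n}" using i(2) by simp
qed

lemma finite_pairs: "finite A \<Longrightarrow> finite (pairs A)"
  unfolding pairs_def by (rule finite_subset[of _ "Pow A"]) auto

lemma finite_CL: "finite (CL n g)"
proof -
  have "CL n g \<subseteq> {l. set l \<subseteq> {..<n} \<and> length l \<le> g}" by (auto simp: CL_def)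
  then show ?thesis using finite_lists_length_le[of "{..<n}" g] finite_subset by auto
qed

lemma card_filter_sum_real:
  "finite A \<Longrightarrow> real (card {x\<in>A. P x}) = (\<Sum>x\<in>A. if P x then 1 else 0::real)"
proof -
  assume "finite A"
  then have "card {x\<in>A. P x} = (\<Sum>x\<in>A. if P x then 1 else 0::nat)"
    by (simp add: sum.inter_filter[symmetric])
  then have "real (card {x\<in>A. P x}) = (\<Sum>x\<in>A. real (if P x then 1 else 0::nat))"
    by (simp only: of_nat_sum)
  also have "\<dots> = (\<Sum>x\<in>A. if P x then 1 else 0::real)" by (rule sum.cong) auto
  finally show ?thesis .
qed

lemma expect_bad:
  "(\<Sum>E\<in>Pow (pairs {..<n}). wt p (pairs {..<n}) E * real (card (bad n g E))) = (\<Sum>l\<in>CL n g. p ^ length l)"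
proof -
  let ?P = "pairs {..<n}"
  have finP: "finite ?P" by (simp add: finite_pairs)
  have "(\<Sum>E\<in>Pow ?P. wt p ?P E * real (card (bad n g E))) =
        (\<Sum>E\<in>Pow ?P. \<Sum>l\<in>CL n g. if cyc l \<subseteq> E then wt p ?P E else 0)"
    unfolding bad_def by (simp add: card_filter_sum_real finite_CL sum_distrib_left if_distrib) (intro sum.cong refl; simp)
  also have "\<dots> = (\<Sum>l\<in>CL n g. \<Sum>E\<in>Pow ?P. if cyc l \<subseteq> E then wt p ?P E else 0)"
    by (rule sum.swap)
  also have "\<dots> = (\<Sum>l\<in>CL n g. p ^ card (cyc l))"
    by (rule sum.cong[OF refl], rule wt_sup[OF finP cyc_sub_pairs])
  also have "\<dots> = (\<Sum>l\<in>CL n g. p ^ length l)"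
    by (rule sum.cong[OF refl]) (simp add: CL_def card_cyc)
  finally show ?thesis .
qed

lemma sum_CL_bound:
  assumes "0 \<le> p"
  shows "(\<Sum>l\<in>CL n g. p ^ length l) \<le> (\<Sum>k<g. (real n * p) ^ k)"
proof -
  define L where "L k = {l. set l \<subseteq> {..<n} \<and> length l = k}" for k
  have finL: "finite (L k)" for k unfolding L_def by (rule finite_lists_length_eq) simp
  have sub: "CL n g \<subseteq> (\<Union>k\<in>{..<g}. L k)" by (auto simp: CL_def L_def)
  have "(\<Sum>l\<in>CL n g. p ^ length l) \<le> (\<Sum>l\<in>(\<Union>k\<in>{..<g}. L k). p ^ length l)"
    by (rule sum_mono2) (use finL sub assms in auto)
  also have "\<dots> = (\<Sum>k<g. \<Sum>l\<in>L k. p ^ length l)"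
    by (rule sum.UNION_disjoint) (auto simp: L_def finite_lists_length_eq)
  also have "\<dots> = (\<Sum>k<g. (real n * p) ^ k)"
  proof (rule sum.cong[OF refl])
    fix k
    have "(\<Sum>l\<in>L k. p ^ length l) = (\<Sum>l\<in>L k. p ^ k)" by (rule sum.cong) (auto simp: L_def)
    also have "\<dots> = real (card (L k)) * p ^ k" by simp
    also have "card (L k) = n ^ k" unfolding L_def by (simp add: card_lists_length_eq)
    finally show "(\<Sum>l\<in>L k. p ^ length l) = (real n * p) ^ k" by (simp add: power_mult_distrib)
  qed
  finally show ?thesis .
qed

lemma geom_256: "(\<Sum>k<g. (256::real) ^ k) \<le> 256 ^ g"
proof (induction g)
  case 0 then show ?case by simp
next
  case (Suc g)
  have "(\<Sum>k<Suc g. (256::real) ^ k) = (\<Sum>k<g. 256 ^ k) + 256 ^ g" by simp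
  also have "\<dots> \<le> 256 ^ g + 256 ^ g" using Suc by simp
  also have "\<dots> \<le> 256 ^ Suc g" by simp
  finally show ?case .
qed

lemma indep_bound:
  assumes "0 \<le> p" "p \<le> 1"
  shows "(\<Sum>E\<in>Pow (pairs {..<n}). wt p (pairs {..<n}) E *
           (if \<exists>T. T \<subseteq> {..<n} \<and> card T = t \<and> pairs T \<inter> E = {} then 1 else 0))
         \<le> real (n choose t) * (1 - p) ^ (t choose 2)"
proof -
  let ?P = "pairs {..<n}"
  define Ts where "Ts = {T. T \<subseteq> {..<n} \<and> card T = t}"
  have finP: "finite ?P" by (simp add: finite_pairs)
  have finTs: "finite Ts" unfolding Ts_def by (rule finite_subset[of _ "Pow {..<n}"]) auto
  have "(\<Sum>E\<in>Pow ?P. wt p ?P E *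
           (if \<exists>T. T \<subseteq> {..<n} \<and> card T = t \<and> pairs T \<inter> E = {} then 1 else 0))
        \<le> (\<Sum>E\<in>Pow ?P. \<Sum>T\<in>Ts. if pairs T \<inter> E = {} then wt p ?P E else 0)"
  proof (rule sum_mono)
    fix E assume "E \<in> Pow ?P"
    have w0: "0 \<le> wt p ?P E" using assms by (rule wt_nonneg)
    show "wt p ?P E * (if \<exists>T. T \<subseteq> {..<n} \<and> card T = t \<and> pairs T \<inter> E = {} then 1 else 0)
          \<le> (\<Sum>T\<in>Ts. if pairs T \<inter> E = {} then wt p ?P E else 0)"
    proof (cases "\<exists>T. T \<subseteq> {..<n} \<and> card T = t \<and> pairs T \<inter> E = {}")
      case True
      then obtain T0 where T0: "T0 \<in> Ts" "pairs T0 \<inter> E = {}" unfolding Ts_def by auto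
      have "wt p ?P E = (if pairs T0 \<inter> E = {} then wt p ?P E else 0)" using T0 by simp
      also have "\<dots> \<le> (\<Sum>T\<in>Ts. if pairs T \<inter> E = {} then wt p ?P E else 0)"
        by (rule member_le_sum) (use T0 finTs w0 in auto)
      finally show ?thesis using True by simp
    next
      case False
      show ?thesis unfolding if_not_P[OF False] using w0 by (simp add: sum_nonneg)
    qed
  qed
  also have "\<dots> = (\<Sum>T\<in>Ts. \<Sum>E\<in>Pow ?P. if pairs T \<inter> E = {} then wt p ?P E else 0)"
    by (rule sum.swap)
  also have "\<dots> = (\<Sum>T\<in>Ts. (1 - p) ^ (t choose 2))"
  proof (rule sum.cong[OF refl])
    fix T assume T: "T \<in> Ts"
    then have sub: "pairs T \<subseteq> ?P" unfolding Ts_def pairs_def by auto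
    have Tt: "T \<subseteq> {..<n}" "card T = t" using T unfolding Ts_def by auto
    have finT: "finite T" using finite_subset[OF Tt(1)] by simp
    have "card (pairs T) = card T choose 2"
      unfolding pairs_def by (rule n_subsets[OF finT])
    then have "card (pairs T) = t choose 2" using Tt(2) by simp
    then show "(\<Sum>E\<in>Pow ?P. if pairs T \<inter> E = {} then wt p ?P E else 0) = (1 - p) ^ (t choose 2)"
      using wt_disj[OF finP sub] by simp
  qed
  also have "\<dots> = real (card Ts) * (1 - p) ^ (t choose 2)" by simp
  also have "card Ts = card {..<n} choose t" unfolding Ts_def by (rule n_subsets) simp
  also have "card {..<n} = n" by simp
  finally show ?thesis .
qed

lemma one_minus_pow_half:
  assumes "M \<ge> (1::nat)"
  shows "(1 - 1 / real M) ^ M \<le> 1 / 2"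
proof -
  have p0: "0 \<le> 1 - 1 / real M" using assms by simp
  have "1 - 1 / real M \<le> exp (- (1 / real M))"
    using exp_ge_add_one_self[of "- (1 / real M)"] by linarith
  then have "(1 - 1 / real M) ^ M \<le> exp (- (1 / real M)) ^ M"
    by (rule power_mono[OF _ p0])
  also have "\<dots> = exp (- (1 / real M) * real M)" by (simp add: exp_of_nat_mult[symmetric] mult.commute)
  also have "\<dots> = exp (-1)" using assms by simp
  also have "\<dots> = 1 / exp 1" by (simp add: exp_minus field_simps)
  also have "\<dots> \<le> 1 / 2"
  proof -
    have "2 \<le> exp (1::real)" using exp_ge_add_one_self[of 1] by simp
    then show ?thesis by (simp add: divide_simps)
  qed
  finally show ?thesis .
qed

lemma choose_bound:
  fixes M :: nat assumes "M \<ge> 1"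
  shows "M * (256 * M + 1) \<le> (32 * M) choose 2"
proof -
  have "(32 * M) choose 2 = (32 * M) * (32 * M - 1) div 2" by (rule choose_two)
  also have "(32 * M) * (32 * M - 1) = 2 * (M * (16 * (32 * M - 1)))" by simp
  finally have c: "(32 * M) choose 2 = M * (16 * (32 * M - 1))" by simp
  have "256 * M + 1 \<le> 16 * (32 * M - 1)" using assms by simp
  then have "M * (256 * M + 1) \<le> M * (16 * (32 * M - 1))" by (rule mult_le_mono2)
  then show ?thesis using c by simp
qed

lemma exists_good:
  fixes g :: nat
  shows "\<exists>E\<in>Pow (pairs {..<256*256^g}). 2 * card (bad (256*256^g) g E) < 256*256^g \<and>
           \<not>(\<exists>T. T \<subseteq> {..<256*256^g} \<and> card T = 32*256^g \<and> pairs T \<inter> E = {})"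
proof (rule ccontr)
  assume neg: "\<not> ?thesis"
  define M :: nat where "M = 256^g"
  define n where "n = 256 * M"
  define t where "t = 32 * M"
  define p :: real where "p = 1 / real M"
  define P where "P = pairs {..<n}"
  have M1: "M \<ge> 1" unfolding M_def by simp
  have p0: "0 \<le> p" and p1: "p \<le> 1" using M1 by (auto simp: p_def)
  have np: "real n * p = 256" using M1 by (simp add: n_def p_def)
  have finP: "finite P" unfolding P_def by (simp add: finite_pairs)
  define B1 where "B1 E = (if n \<le> 2 * card (bad n g E) then 1 else 0::real)" for E
  define B2 where "B2 E = (if \<exists>T. T \<subseteq> {..<n} \<and> card T = t \<and> pairs T \<inter> E = {} then 1 else 0::real)" for E
  have neg': "n \<le> 2 * card (bad n g E) \<or> (\<exists>T. T \<subseteq> {..<n} \<and> card T = t \<and> pairs T \<inter> E = {})"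
    if "E \<in> Pow P" for E
    using neg that unfolding P_def n_def t_def M_def by (meson not_less)
  have allbad: "1 \<le> B1 E + B2 E" if "E \<in> Pow P" for E
  proof -
    have "0 \<le> B1 E" "0 \<le> B2 E" unfolding B1_def B2_def by auto
    then show ?thesis using neg'[OF that] unfolding B1_def B2_def
      by (smt (verit))
  qed
  have w0: "0 \<le> wt p P E" for E by (rule wt_nonneg[OF p0 p1])
  have Exp: "(\<Sum>E\<in>Pow P. wt p P E * real (card (bad n g E))) \<le> real M"
  proof -
    have "(\<Sum>E\<in>Pow P. wt p P E * real (card (bad n g E))) = (\<Sum>l\<in>CL n g. p ^ length l)"
      unfolding P_def by (rule expect_bad)
    also have "\<dots> \<le> (\<Sum>k<g. (real n * p) ^ k)" by (rule sum_CL_bound[OF p0])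
    also have "\<dots> = (\<Sum>k<g. (256::real) ^ k)" by (simp add: np)
    also have "\<dots> \<le> 256 ^ g" by (rule geom_256)
    also have "\<dots> = real M" by (simp add: M_def)
    finally show ?thesis .
  qed
  have S1: "(\<Sum>E\<in>Pow P. wt p P E * B1 E) \<le> 1 / 128"
  proof -
    have "(\<Sum>E\<in>Pow P. wt p P E * B1 E) \<le> (\<Sum>E\<in>Pow P. wt p P E * (2 * real (card (bad n g E)) / real n))"
    proof (rule sum_mono)
      fix E
      have npos: "0 < real n" using M1 by (simp add: n_def)
      have "B1 E \<le> 2 * real (card (bad n g E)) / real n"
      proof (cases "n \<le> 2 * card (bad n g E)")
        case True
        then have "real n \<le> 2 * real (card (bad n g E))" by (metis of_nat_le_iff of_nat_mult of_nat_numeral)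
        then show ?thesis using True npos by (simp add: B1_def le_divide_eq)
      next
        case False
        then show ?thesis by (simp add: B1_def)
      qed
      then show "wt p P E * B1 E \<le> wt p P E * (2 * real (card (bad n g E)) / real n)"
        by (rule mult_left_mono[OF _ w0])
    qed
    also have "\<dots> = (2 / real n) * (\<Sum>E\<in>Pow P. wt p P E * real (card (bad n g E)))"
      by (simp add: sum_distrib_left field_simps)
    also have "\<dots> \<le> (2 / real n) * real M"
      by (rule mult_left_mono[OF Exp]) simp
    also have "\<dots> = 1 / 128" using M1 by (simp add: n_def field_simps)
    finally show ?thesis .
  qed
  have S2: "(\<Sum>E\<in>Pow P. wt p P E * B2 E) \<le> 1 / 2"
  proof -
    have "(\<Sum>E\<in>Pow P. wt p P E * B2 E) \<le> real (n choose t) * (1 - p) ^ (t choose 2)"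
      unfolding B2_def P_def by (rule indep_bound[OF p0 p1])
    also have "\<dots> \<le> 2 ^ n * (1 / 2) ^ (n + 1)"
    proof (rule mult_mono)
      have "real (n choose t) \<le> real (2 ^ n)"
        using binomial_le_pow2[of n t] by (simp only: of_nat_le_iff)
      then show "real (n choose t) \<le> 2 ^ n" by simp
      have "(1 - p) ^ (t choose 2) \<le> (1 - p) ^ (M * (n + 1))"
        by (rule power_decreasing) (use choose_bound[OF M1] p0 p1 in \<open>auto simp: t_def n_def\<close>)
      also have "\<dots> = ((1 - p) ^ M) ^ (n + 1)" by (rule power_mult)
      also have "\<dots> \<le> (1 / 2) ^ (n + 1)"
        by (rule power_mono) (use one_minus_pow_half[OF M1] p1 in \<open>auto simp: p_def\<close>)
      finally show "(1 - p) ^ (t choose 2) \<le> (1 / 2) ^ (n + 1)" .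
    qed (use p1 in auto)
    also have "\<dots> = (2 * (1 / 2)) ^ n * (1 / (2::real))" by (simp only: power_mult_distrib power_add power_one_right mult.assoc)
    also have "\<dots> = 1 / 2" by simp
    finally show ?thesis .
  qed
  have "1 = (\<Sum>E\<in>Pow P. wt p P E)" using wt_total[OF finP] by simp
  also have "\<dots> \<le> (\<Sum>E\<in>Pow P. wt p P E * B1 E + wt p P E * B2 E)"
  proof (rule sum_mono)
    fix E assume "E \<in> Pow P"
    then have "wt p P E * 1 \<le> wt p P E * (B1 E + B2 E)"
      using allbad w0 by (intro mult_left_mono) auto
    then show "wt p P E \<le> wt p P E * B1 E + wt p P E * B2 E" by (simp add: algebra_simps)
  qed
  also have "\<dots> = (\<Sum>E\<in>Pow P. wt p P E * B1 E) + (\<Sum>E\<in>Pow P. wt p P E * B2 E)"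
    by (rule sum.distrib)
  also have "\<dots> \<le> 1/128 + 1/2" using S1 S2 by linarith
  finally show False by simp
qed

lemma CBU_rep_mono:
  assumes "CBU_rep d V E lo hi" "H \<subseteq> V"
  shows "CBU_rep d H E lo hi"
  using assms unfolding CBU_rep_def by blast

lemma cycle_shift:
  fixes i k :: nat
  assumes ik: "i < k" and k3: "3 \<le> k"
  shows "((i + k - 1) mod k + 1) mod k = i" "(i + 1) mod k \<noteq> (i + k - 1) mod k"
    "(i + k - 1) mod k < k" "(i + 1) mod k < k"
proof -
  have kpos: "0 < k" using k3 by linarith
  show "(i + k - 1) mod k < k" "(i + 1) mod k < k" using kpos by (simp_all only: mod_less_divisor)
  have A: "(i + k - 1) mod k = (if i = 0 then k - 1 else i - 1)"
  proof (cases "i = 0")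
    case True
    then have "i + k - 1 = k - 1" by simp
    moreover have "k - 1 < k" using kpos by linarith
    ultimately have "(i + k - 1) mod k = k - 1" by (simp only: mod_less)
    then show ?thesis using True by simp
  next
    case False
    then have "i + k - 1 = (i - 1) + k" by linarith
    moreover have "i - 1 < k" using ik by linarith
    ultimately have "(i + k - 1) mod k = i - 1" by (simp only: mod_add_self2 mod_less)
    then show ?thesis using False by simp
  qed
  have B: "(i + 1) mod k = (if i + 1 < k then i + 1 else 0)"
  proof (cases "i + 1 < k")
    case True then show ?thesis by simp
  next
    case False
    then have "i + 1 = k" using ik by linarith
    then show ?thesis using False by simp
  qed
  show "((i + k - 1) mod k + 1) mod k = i"
  proof (cases "i = 0")
    case True
    then have "(i + k - 1) mod k + 1 = k" using A kpos by simp
    then show ?thesis using True by simp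
  next
    case False
    then have "(i + k - 1) mod k + 1 = i" using A by simp
    then show ?thesis using ik by simp
  qed
  show "(i + 1) mod k \<noteq> (i + k - 1) mod k"
    using A B k3 ik by (auto split: if_splits)
qed

lemma prop_along_cycle:
  assumes "\<forall>i<k. R (vs!i) (vs!((i+1) mod k))"
    and "\<And>u v. R u v \<Longrightarrow> Q u \<Longrightarrow> Q v"
    and "Q (vs!0)"
  shows "\<forall>i<k. Q (vs!i)"
proof -
  have "i < k \<longrightarrow> Q (vs!i)" for i
  proof (induction i)
    case 0 then show ?case using assms(3) by simp
  next
    case (Suc i)
    show ?case
    proof
      assume "Suc i < k"
      then have "R (vs!i) (vs!((i+1) mod k))" using assms(1) by (meson Suc_lessD)
      moreover have "(i+1) mod k = Suc i" using \<open>Suc i < k\<close> by simp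
      ultimately show "Q (vs!Suc i)" using Suc \<open>Suc i < k\<close> assms(2) by auto
    qed
  qed
  then show ?thesis by blast
qed

theorem mainTheorem13:
  fixes g :: nat
  assumes "g \<ge> 3"
  shows "\<exists>(V :: nat set) E. simple_graph V E \<and> has_girth V E g \<and> \<not> CBU V E"
proof -
  define M :: nat where "M = 256^g"
  define n where "n = 256 * M"
  define t where "t = 32 * M"
  obtain E where EP: "E \<in> Pow (pairs {..<n})" and few: "2 * card (bad n g E) < n"
    and noind: "\<not>(\<exists>T. T \<subseteq> {..<n} \<and> card T = t \<and> pairs T \<inter> E = {})"
    using exists_good[of g] unfolding n_def t_def M_def by blast
  define H where "H = {..<n} - hd ` bad n g E"
  define C where "C = {n..<n+g}"
  define Adj where "Adj u v = (u \<noteq> v \<and> {u,v} \<in> E)" for u v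
  define cadj where "cadj u v = (u \<in> C \<and> v \<in> C \<and> (v = u+1 \<or> u = v+1 \<or> (u = n \<and> v = n+g-1) \<or> (v = n \<and> u = n+g-1)))" for u v
  define V' where "V' = H \<union> C"
  define E' where "E' u v = ((u \<in> H \<and> v \<in> H \<and> Adj u v) \<or> cadj u v)" for u v
  have g3: "3 \<le> g" by fact
  have HC: "H \<inter> C = {}" by (auto simp: H_def C_def)
  have Hn: "H \<subseteq> {..<n}" by (auto simp: H_def)
  have finbad: "finite (bad n g E)"
    by (rule finite_subset[OF _ finite_CL[of n g]]) (auto simp: bad_def)
  have cardH: "n < 2 * card H"
  proof -
    have "card {..<n} - card (hd ` bad n g E) \<le> card H"
      unfolding H_def by (rule diff_card_le_card_Diff) (use finbad in auto)
    moreover have "card (hd ` bad n g E) \<le> card (bad n g E)" by (rule card_image_le[OF finbad])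
    ultimately show ?thesis using few by simp
  qed
  have E'cases: "(u \<in> H \<and> v \<in> H) \<or> (u \<in> C \<and> v \<in> C \<and> cadj u v)" if "E' u v" for u v
    using that unfolding E'_def cadj_def by auto
  have cadj_sym: "cadj u v \<Longrightarrow> cadj v u" for u v unfolding cadj_def by auto
  have sg: "simple_graph V' E'"
  proof -
    have "finite V'" unfolding V'_def H_def C_def by auto
    moreover have "\<forall>u v. E' u v \<longrightarrow> u \<in> V' \<and> v \<in> V'" using E'cases unfolding V'_def by blast
    moreover have "\<forall>u v. E' u v \<longrightarrow> E' v u"
      unfolding E'_def Adj_def using cadj_sym by (auto simp: insert_commute)
    moreover have "\<forall>v. \<not> E' v v" unfolding E'_def Adj_def cadj_def using g3 by auto
    ultimately show ?thesis unfolding simple_graph_def by blast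
  qed
  have cyc_g: "has_cycle_of_length V' E' g"
  proof -
    have "\<forall>i<g. E' ([n..<n+g] ! i) ([n..<n+g] ! ((i + 1) mod g))"
    proof (intro allI impI)
    fix i assume i: "i < g"
    show "E' ([n..<n+g] ! i) ([n..<n+g] ! ((i + 1) mod g))"
    proof (cases "i + 1 < g")
      case True
      then show ?thesis using i by (simp add: E'_def cadj_def C_def)
    next
      case False
      then have i1: "i + 1 = g" using i by simp
      then have ii: "i = g - 1" "(i + 1) mod g = 0" by auto
      have "cadj (n + i) n" unfolding cadj_def C_def using ii g3 by auto
      then show ?thesis using ii i g3 by (simp add: E'_def)
    qed
    qed
    moreover have "set [n..<n+g] \<subseteq> V'" by (auto simp: V'_def C_def)
    ultimately show ?thesis unfolding has_cycle_of_length_def using g3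
      by (intro conjI exI[of _ "[n..<n+g]"]) auto
  qed
  have nocyc: "\<not> has_cycle_of_length V' E' k" if "k < g" for k
  proof
    assume "has_cycle_of_length V' E' k"
    then obtain vs where k3: "3 \<le> k" and len: "length vs = k" and dist: "distinct vs"
      and sub: "set vs \<subseteq> V'" and adj: "\<forall>i<k. E' (vs ! i) (vs ! ((i + 1) mod k))"
      unfolding has_cycle_of_length_def by blast
    have v0: "vs!0 \<in> set vs" using len k3 by simp
    show False
    proof (cases "vs!0 \<in> H")
      case True
      have allH: "\<forall>i<k. vs!i \<in> H"
        by (rule prop_along_cycle[where R=E' and Q="\<lambda>x. x \<in> H", OF adj _ True]) (use E'cases HC in blast)
      have "cyc vs \<subseteq> E"
      proof
        fix e assume "e \<in> cyc vs"
        then obtain i where i: "i < k" "e = {vs!i, vs!((i+1) mod k)}" unfolding cyc_def using len by auto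
        have "(i+1) mod k < k" using k3 by simp
        then have "vs!i \<in> H" "vs!((i+1) mod k) \<in> H" using allH i by auto
        then have hH: "vs!i \<in> H" by simp
        have e': "E' (vs!i) (vs!((i+1) mod k))" using adj i(1) by blast
        have nc: "\<not> cadj (vs!i) (vs!((i+1) mod k))" using hH HC unfolding cadj_def by blast
        have "Adj (vs!i) (vs!((i+1) mod k))" using e' nc unfolding E'_def by blast
        then show "e \<in> E" using i by (simp add: Adj_def)
      qed
      moreover have "vs \<in> CL n g"
      proof -
        have "set vs \<subseteq> H" using allH len by (auto simp: in_set_conv_nth)
        then show ?thesis using Hn dist k3 len \<open>k < g\<close> by (auto simp: CL_def)
      qed
      ultimately have "vs \<in> bad n g E" by (simp add: bad_def)
      then have "hd vs \<notin> H" by (auto simp: H_def)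
      moreover have "hd vs = vs!0" using len k3 by (cases vs) auto
      ultimately show False using True by simp
    next
      case False
      then have c0: "vs!0 \<in> C" using sub v0 by (auto simp: V'_def)
      have allC: "\<forall>i<k. vs!i \<in> C"
        by (rule prop_along_cycle[where R=E' and Q="\<lambda>x. x \<in> C", OF adj _ c0]) (use E'cases HC in blast)
      define s where "s v = (if v = n+g-1 then n else v+1)" for v
      define pr where "pr v = (if v = n then n+g-1 else v-1)" for v
      have cadj_iff: "x = s v \<or> x = pr v" if "cadj v x" for v x
        using that g3 unfolding cadj_def s_def pr_def C_def by auto
      have closed: "s v \<in> set vs" if vin: "v \<in> set vs" for v
      proof -
        obtain i where i0: "i < length vs" "vs!i = v" using vin by (auto simp: in_set_conv_nth)
        then have i: "i < k" "vs!i = v" using len by auto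
        note cs = cycle_shift[OF i(1) k3]
        define a where "a = vs!((i+1) mod k)"
        define b where "b = vs!((i+k-1) mod k)"
        have ab: "a \<noteq> b" unfolding a_def b_def
          using nth_eq_iff_index_eq[OF dist, of "(i+1) mod k" "(i+k-1) mod k"] cs len by simp
        have ain: "a \<in> set vs" "b \<in> set vs" unfolding a_def b_def using cs len by auto
        have "E' v a" using adj i unfolding a_def by auto
        then have "cadj v a" using E'cases allC i HC by blast
        have "E' b v" using adj[rule_format, OF cs(3)] cs(1) i unfolding b_def by simp
        then have "cadj b v" using E'cases allC i HC by blast
        then have "cadj v b" by (rule cadj_sym)
        have "s v = a \<or> s v = b"
          using cadj_iff[OF \<open>cadj v a\<close>] cadj_iff[OF \<open>cadj v b\<close>] ab by blast
        then show ?thesis using ain by auto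
      qed
      have up: "z \<in> set vs" if "y \<in> set vs" "y \<le> z" "z \<le> n+g-1" for y z
        using that
      proof (induction z)
        case 0 then show ?case by simp
      next
        case (Suc z)
        show ?case
        proof (cases "y = Suc z")
          case True then show ?thesis using Suc by simp
        next
          case False
          then have "z \<in> set vs" using Suc by simp
          then have "s z \<in> set vs" by (rule closed)
          moreover have "s z = Suc z" using Suc.prems(3) by (simp add: s_def)
          ultimately show ?thesis by simp
        qed
      qed
      have "vs!0 \<le> n+g-1" using c0 by (auto simp: C_def)
      then have top: "n+g-1 \<in> set vs" using up[OF v0] by simp
      have "n \<in> set vs" using closed[OF top] by (simp add: s_def)
      then have "C \<subseteq> set vs" using up[of n] by (auto simp: C_def)
      then have "card C \<le> card (set vs)" by (rule card_mono[OF finite_set])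
      then show False using distinct_card[OF dist] len \<open>k < g\<close> by (simp add: C_def)
    qed
  qed
  have notcbu: "\<not> CBU V' E'"
  proof
    assume "CBU V' E'"
    then obtain d lo hi where d: "d \<ge> 1" and rep: "CBU_rep d V' E' lo hi"
      unfolding CBU_def d_CBU_def by blast
    have repH: "CBU_rep d H E' lo hi" by (rule CBU_rep_mono[OF rep]) (auto simp: V'_def)
    have finH: "finite H" using Hn by (rule finite_subset) simp
    from CBU_indep[OF repH d finH] obtain I where I: "I \<subseteq> H"
      and ind: "\<forall>u\<in>I. \<forall>v\<in>I. u \<noteq> v \<longrightarrow> \<not> E' u v"
      and cI: "card H \<le> 4 * card I"
      by blast
    have "t \<le> card I" using cardH cI unfolding n_def t_def by linarith
    then obtain T where T: "T \<subseteq> I" "card T = t" by (rule obtain_subset_with_card_n)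
    have "pairs T \<inter> E = {}"
    proof (rule ccontr)
      assume "pairs T \<inter> E \<noteq> {}"
      then obtain e where e: "e \<in> pairs T" "e \<in> E" by auto
      then obtain u v where uv: "e = {u,v}" "u \<noteq> v" "u \<in> T" "v \<in> T"
        unfolding pairs_def by (auto simp: card_2_iff)
      then have "E' u v" using e T I unfolding E'_def Adj_def by auto
      then show False using ind uv T by blast
    qed
    moreover have "T \<subseteq> {..<n}" using T I Hn by auto
    ultimately show False using noind T by blast
  qed
  have "has_girth V' E' g" unfolding has_girth_def using cyc_g nocyc by blast
  then show ?thesis using sg notcbu by blast
qed

end
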